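(* Let $k\ge1$ and let $F$ be a 2-factor on $3k$ vertices. The bipartite construction $B$ with ratio $\frac13$ on $3k$ vertices contains a copy of $F$ with at least $2k-1$ red edges and a copy of $F$ with at least $2k-1$ blue edges.
   Context: A 2-factor on $N$ vertices is a 2-regular graph on $N$ vertices. The bipartite construction with ratio $\rho$ on $N$ vertices is the red/blue-coloring of $K_N$ obtained by partitioning the vertices into $X\cup Y$ with $|X|=\rho N$, coloring all edges touching $X$ with one color and all edges inside $Y$ with the other color (either assignment of red/blue). A copy of $F$ is a subgraph isomorphic to $F$. *)

theory Defs
  imports Complex_Main
begin

datatype colour = Red | Blue

definition two_factor :: "'a set \<Rightarrow> 'a set set \<Rightarrow> bool" where
  "two_factor V E \<longleftrightarrow> finite V \<and> (\<forall>e\<in>E. e \<subseteq> V \<and> card e = 2)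
     \<and> (\<forall>v\<in>V. card {e\<in>E. v \<in> e} = 2)"

definition KN_edges :: "nat \<Rightarrow> nat set set" where
  "KN_edges N = {e. e \<subseteq> {0..<N} \<and> card e = 2}"

definition bipartite_construction :: "nat \<Rightarrow> real \<Rightarrow> (nat set \<Rightarrow> colour) \<Rightarrow> bool" where
  "bipartite_construction N rho col \<longleftrightarrow>
     (\<exists>X \<subseteq> {0..<N}. real (card X) = rho * real N \<and>
       ((\<forall>e\<in>KN_edges N. col e = (if e \<inter> X \<noteq> {} then Red else Blue)) \<or>
        (\<forall>e\<in>KN_edges N. col e = (if e \<inter> X \<noteq> {} then Blue else Red))))"

definition has_copy_with :: "nat \<Rightarrow> (nat set \<Rightarrow> colour) \<Rightarrow> 'a set \<Rightarrow> 'a set set \<Rightarrow> colour \<Rightarrow> nat \<Rightarrow> bool" where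
  "has_copy_with N col V E c m \<longleftrightarrow>
     (\<exists>f. inj_on f V \<and> f ` V \<subseteq> {0..<N} \<and> card {e\<in>E. col (f ` e) = c} \<ge> m)"

end

theory Submission
  imports Defs
begin

lemma card_filter_sum: "finite A \<Longrightarrow> card {x\<in>A. P x} = (\<Sum>x\<in>A. if P x then 1 else 0)"
  by (simp add: sum.inter_filter[symmetric])

lemma tf_finE: "two_factor V E \<Longrightarrow> finite E"
  unfolding two_factor_def by (meson Pow_iff finite_Pow_iff finite_subset subsetI)

lemma tf_DC:
  assumes tf: "two_factor V E" and T: "T \<subseteq> V"
  shows "(\<Sum>e\<in>E. card (e \<inter> T)) = 2 * card T"
proof -
  have fE: "finite E" using tf_finE[OF tf] .
  have fV: "finite V" using tf unfolding two_factor_def by auto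
  have fT: "finite T" using fV T finite_subset by auto
  have "(\<Sum>e\<in>E. card (e \<inter> T)) = (\<Sum>e\<in>E. \<Sum>v\<in>T. if v \<in> e then 1 else 0)"
  proof (rule sum.cong[OF refl])
    fix e assume "e \<in> E"
    have "card (e \<inter> T) = card {v\<in>T. v \<in> e}" by (rule arg_cong[where f=card]) blast
    also have "\<dots> = (\<Sum>v\<in>T. if v \<in> e then 1 else 0)" using card_filter_sum[OF fT] .
    finally show "card (e \<inter> T) = (\<Sum>v\<in>T. if v \<in> e then 1 else 0)" .
  qed
  also have "\<dots> = (\<Sum>v\<in>T. \<Sum>e\<in>E. if v \<in> e then 1 else 0)" by (rule sum.swap)
  also have "\<dots> = (\<Sum>v\<in>T. card {e\<in>E. v \<in> e})" using card_filter_sum[OF fE] by simp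
  also have "\<dots> = (\<Sum>v\<in>T. 2)" using tf T unfolding two_factor_def by (intro sum.cong) auto
  finally show ?thesis by simp
qed

lemma tf_edge: "two_factor V E \<Longrightarrow> e \<in> E \<Longrightarrow> e \<subseteq> V \<and> card e = 2 \<and> finite e"
  unfolding two_factor_def by (auto intro: card_ge_0_finite)

lemma grow:
  assumes tf: "two_factor V E"
  shows "m \<le> card V \<Longrightarrow> \<exists>T\<subseteq>V. card T = m \<and> m \<le> card {e\<in>E. e \<subseteq> T} + 1"
proof (induction m)
  case 0 then show ?case by auto
next
  case (Suc m)
  have fE: "finite E" using tf_finE[OF tf] .
  have fV: "finite V" using tf unfolding two_factor_def by auto
  obtain T where T: "T \<subseteq> V" "card T = m" "m \<le> card {e\<in>E. e \<subseteq> T} + 1"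
    using Suc by auto
  have fT: "finite T" using fV T finite_subset by auto
  show ?case
  proof (cases "\<exists>e\<in>E. card (e \<inter> T) = 1")
    case True
    then obtain e where e: "e \<in> E" "card (e \<inter> T) = 1" by auto
    have ee: "e \<subseteq> V" "card e = 2" "finite e" using tf_edge[OF tf e(1)] by auto
    have "card (e - T) = 1" using ee e(2) by (simp add: card_Diff_subset_Int)
    then obtain w where w: "e - T = {w}" using card_1_singletonE by blast
    have wV: "w \<in> V" "w \<notin> T" using w ee by auto
    define T' where "T' = insert w T"
    have eT': "e \<subseteq> T'" using w T'_def by auto
    have eT: "\<not> e \<subseteq> T" using w by auto
    have sub: "insert e {e\<in>E. e \<subseteq> T} \<subseteq> {e\<in>E. e \<subseteq> T'}" using eT' e(1) T'_def by auto
    have "card (insert e {e\<in>E. e \<subseteq> T}) = card {e\<in>E. e \<subseteq> T} + 1"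
      using eT fE by simp
    moreover have "card (insert e {e\<in>E. e \<subseteq> T}) \<le> card {e\<in>E. e \<subseteq> T'}"
      using sub fE by (intro card_mono) auto
    ultimately have "Suc m \<le> card {e\<in>E. e \<subseteq> T'} + 1" using T by linarith
    moreover have "card T' = Suc m" using T'_def wV fT T by simp
    moreover have "T' \<subseteq> V" using T'_def wV T by auto
    ultimately show ?thesis by blast
  next
    case False
    have pw: "card (e \<inter> T) = (if e \<subseteq> T then 2 else 0)" if "e \<in> E" for e
    proof -
      have ee: "card e = 2" "finite e" using tf_edge[OF tf that] by auto
      have "card (e \<inter> T) \<le> 2" using card_mono[OF ee(2), of "e \<inter> T"] ee by simp
      moreover have "card (e \<inter> T) \<noteq> 1" using False that by auto
      moreover have "card (e \<inter> T) = 2 \<longleftrightarrow> e \<subseteq> T"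
        proof
        assume "card (e \<inter> T) = 2"
        then have "e \<inter> T = e" using card_subset_eq[OF ee(2), of "e \<inter> T"] ee by simp
        then show "e \<subseteq> T" by blast
      next
        assume "e \<subseteq> T" then have "e \<inter> T = e" by blast
        then show "card (e \<inter> T) = 2" using ee by simp
      qed
      ultimately show ?thesis by auto
    qed
    have "2 * card T = (\<Sum>e\<in>E. card (e \<inter> T))" using tf_DC[OF tf T(1)] by simp
    also have "\<dots> = (\<Sum>e\<in>E. if e \<subseteq> T then 2 else 0)" using pw by (intro sum.cong) auto
    also have "\<dots> = (\<Sum>e\<in>E. 2 * (if e \<subseteq> T then 1 else 0))" by (intro sum.cong) auto
    also have "\<dots> = 2 * card {e\<in>E. e \<subseteq> T}" by (simp only: card_filter_sum[OF fE] sum_distrib_left)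
    finally have cA: "card {e\<in>E. e \<subseteq> T} = m" using T by simp
    have "card T < card V" using Suc T by simp
    then have "\<not> V \<subseteq> T" using card_mono[OF fT, of V] by linarith
    then obtain w where wV: "w \<in> V" "w \<notin> T" by blast
    define T' where "T' = insert w T"
    have "card {e\<in>E. e \<subseteq> T} \<le> card {e\<in>E. e \<subseteq> T'}"
      using fE T'_def by (intro card_mono) auto
    moreover have "card T' = Suc m" using T'_def wV fT T by simp
    moreover have "T' \<subseteq> V" using T'_def wV T by auto
    ultimately show ?thesis using cA by (intro exI[of _ T']) auto
  qed
qed

lemma indep:
  assumes tf: "two_factor V E"
  shows "W \<subseteq> V \<Longrightarrow> 3 * m \<le> card W \<Longrightarrow> \<exists>T\<subseteq>W. card T = m \<and> (\<forall>e\<in>E. card (e \<inter> T) \<le> 1)"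
proof (induction m arbitrary: W)
  case 0 then show ?case by auto
next
  case (Suc m)
  have fV: "finite V" using tf unfolding two_factor_def by auto
  have fW: "finite W" using Suc fV finite_subset by auto
  obtain v where v: "v \<in> W" using Suc by fastforce
  have c2: "card {e\<in>E. v \<in> e} = 2" using tf v Suc unfolding two_factor_def by auto
  then obtain e1 e2 where e12: "{e\<in>E. v \<in> e} = {e1, e2}" by (meson card_2_iff)
  have e1: "e1 \<in> E" "v \<in> e1" and e2: "e2 \<in> E" "v \<in> e2" using e12 by blast+
  define N where "N = e1 \<union> e2"
  have ce: "card e1 = 2" "finite e1" "card e2 = 2" "finite e2" using tf_edge[OF tf e1(1)] tf_edge[OF tf e2(1)] by auto
  have "card N + card (e1 \<inter> e2) = 4" using card_Un_Int[of e1 e2] ce N_def by simp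
  moreover have "card (e1 \<inter> e2) \<ge> 1" proof -
    have "v \<in> e1 \<inter> e2" using e1 e2 by blast
    then have "card (e1 \<inter> e2) > 0" using ce by (simp add: card_gt_0_iff) blast
    then show ?thesis by simp
  qed
  ultimately have cN: "card N \<le> 3" by linarith
  have eN: "e \<subseteq> N" if "e \<in> E" "v \<in> e" for e using e12 that N_def by blast
  have vN: "v \<in> N" using N_def e1 by auto
  define W' where "W' = W - N"
  have fN: "finite N" using ce N_def by simp
  have "W \<subseteq> W' \<union> N" unfolding W'_def by blast
  then have "card W \<le> card (W' \<union> N)" using fN fW W'_def by (intro card_mono) auto
  then have "card W \<le> card W' + card N" using card_Un_le[of W' N] by linarith
  moreover have "3 * Suc m = 3 * m + 3" by simp
  ultimately have "3 * m \<le> card W'" using Suc.prems cN by linarith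
  moreover have "W' \<subseteq> V" using W'_def Suc by auto
  ultimately obtain T' where T': "T' \<subseteq> W'" "card T' = m" "\<forall>e\<in>E. card (e \<inter> T') \<le> 1"
    using Suc.IH by blast
  have vT': "v \<notin> T'" using T' W'_def vN by auto
  have fT': "finite T'" using T'(1) fW W'_def finite_subset[of T' W] by blast
  define T where "T = insert v T'"
  have "\<forall>e\<in>E. card (e \<inter> T) \<le> 1"
  proof
    fix e assume e: "e \<in> E"
    show "card (e \<inter> T) \<le> 1"
    proof (cases "v \<in> e")
      case True
      then have "e \<inter> T' = {}" using eN[OF e True] T' W'_def by auto
      then have "e \<inter> T = {v}" using T_def True by auto
      then show ?thesis by simp
    next
      case False
      then have "e \<inter> T = e \<inter> T'" using T_def by auto
      then show ?thesis using T' e by simp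
    qed
  qed
  moreover have "card T = Suc m" using T_def vT' fT' T' by simp
  moreover have "T \<subseteq> W" using T_def v T' W'_def by auto
  ultimately show ?case by blast
qed

lemma embed:
  assumes tf: "two_factor V E" and cV: "card V = 3 * k"
    and X: "X \<subseteq> {0..<3*k}" "card X = k"
    and T: "T \<subseteq> V" "card T = k"
    and colh: "\<forall>e\<in>KN_edges (3*k). col e = (if e \<inter> X \<noteq> {} then c1 else c2)"
    and c12: "c1 \<noteq> c2"
  shows "\<exists>f. inj_on f V \<and> f ` V \<subseteq> {0..<3*k} \<and>
     card {e\<in>E. col (f ` e) = c1} = card {e\<in>E. e \<inter> T \<noteq> {}} \<and>
     card {e\<in>E. col (f ` e) = c2} = card {e\<in>E. e \<inter> T = {}}"
proof -
  have fV: "finite V" using tf unfolding two_factor_def by auto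
  have fT: "finite T" using fV T finite_subset by auto
  have fX: "finite X" using X finite_subset by auto
  obtain g where g: "bij_betw g T X" using finite_same_card_bij[OF fT fX] T X by auto
  have c1: "card (V - T) = card ({0..<3*k} - X)" using T X cV fT fX
    by (simp add: card_Diff_subset)
  obtain h where h: "bij_betw h (V - T) ({0..<3*k} - X)"
    using finite_same_card_bij[OF _ _ c1] fV by auto
  define f where "f = (\<lambda>v. if v \<in> T then g v else h v)"
  have bf1: "bij_betw f T X" using g unfolding f_def by (rule bij_betw_cong[THEN iffD1, rotated]) auto
  have bf2: "bij_betw f (V - T) ({0..<3*k} - X)" using h unfolding f_def by (rule bij_betw_cong[THEN iffD1, rotated]) auto
  have "bij_betw f (T \<union> (V - T)) (X \<union> ({0..<3*k} - X))"
    by (rule bij_betw_combine[OF bf1 bf2]) auto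
  moreover have "T \<union> (V - T) = V" using T by auto
  moreover have "X \<union> ({0..<3*k} - X) = {0..<3*k}" using X by auto
  ultimately have bf: "bij_betw f V {0..<3*k}" by simp
  have inj: "inj_on f V" and img: "f ` V = {0..<3*k}" using bf by (auto simp: bij_betw_def)
  have colf: "col (f ` e) = (if e \<inter> T \<noteq> {} then c1 else c2)" if e: "e \<in> E" for e
  proof -
    have ee: "e \<subseteq> V" "card e = 2" using tf_edge[OF tf e] by auto
    have "card (f ` e) = 2" using card_image[OF inj_on_subset[OF inj ee(1)]] ee by simp
    moreover have "f ` e \<subseteq> {0..<3*k}" using img ee by auto
    ultimately have "f ` e \<in> KN_edges (3*k)" unfolding KN_edges_def by auto
    then have "col (f ` e) = (if f ` e \<inter> X \<noteq> {} then c1 else c2)" using colh by auto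
    moreover have "(f ` e \<inter> X \<noteq> {}) = (e \<inter> T \<noteq> {})"
    proof
      assume "f ` e \<inter> X \<noteq> {}"
      then obtain v where v: "v \<in> e" "f v \<in> X" by auto
      show "e \<inter> T \<noteq> {}"
      proof
        assume "e \<inter> T = {}"
        then have "v \<in> V - T" using v ee by auto
        then have "f v \<in> {0..<3*k} - X" using bf2 by (auto simp: bij_betw_def)
        then show False using v by auto
      qed
    next
      assume "e \<inter> T \<noteq> {}"
      then obtain v where v: "v \<in> e" "v \<in> T" by auto
      then have "f v \<in> X" using bf1 by (auto simp: bij_betw_def)
      then show "f ` e \<inter> X \<noteq> {}" using v by auto
    qed
    ultimately show ?thesis by simp
  qed
  have p1: "(col (f ` e) = c1) = (e \<inter> T \<noteq> {})" if "e \<in> E" for e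
    using colf[OF that] c12 by (cases "e \<inter> T = {}") auto
  have p2: "(col (f ` e) = c2) = (e \<inter> T = {})" if "e \<in> E" for e
    using colf[OF that] c12 by (cases "e \<inter> T = {}") auto
  have "{e\<in>E. col (f ` e) = c1} = {e\<in>E. e \<inter> T \<noteq> {}}" using p1 by blast
  moreover have "{e\<in>E. col (f ` e) = c2} = {e\<in>E. e \<inter> T = {}}" using p2 by blast
  ultimately show ?thesis using inj img by (intro exI[of _ f]) simp
qed

lemma count1:
  assumes tf: "two_factor V E" and T: "T \<subseteq> V" "card T = k"
    and ind: "\<forall>e\<in>E. card (e \<inter> T) \<le> 1"
  shows "2 * k \<le> card {e\<in>E. e \<inter> T \<noteq> {}}"
proof -
  have fE: "finite E" using tf_finE[OF tf] .
  have "2 * k = (\<Sum>e\<in>E. card (e \<inter> T))" using tf_DC[OF tf T(1)] T by simp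
  also have "\<dots> \<le> (\<Sum>e\<in>E. if e \<inter> T \<noteq> {} then 1 else 0)"
    using ind by (intro sum_mono) auto
  also have "\<dots> = card {e\<in>E. e \<inter> T \<noteq> {}}" using card_filter_sum[OF fE] by simp
  finally show ?thesis .
qed

lemma count2:
  assumes tf: "two_factor V E" and cV: "card V = 3 * k" and T: "T \<subseteq> V" "card T = k"
    and dense: "k \<le> card {e\<in>E. e \<subseteq> T} + 1"
  shows "2 * k - 1 \<le> card {e\<in>E. e \<inter> T = {}}"
proof -
  have fE: "finite E" using tf_finE[OF tf] .
  have "(\<Sum>e\<in>E. card (e \<inter> V)) = 2 * card V" using tf_DC[OF tf] by simp
  moreover have "(\<Sum>e\<in>E. card (e \<inter> V)) = (\<Sum>e\<in>E. 2)"
    using tf_edge[OF tf] by (intro sum.cong) (auto simp: Int_absorb2)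
  ultimately have cE: "card E = 3 * k" using cV by simp
  have "(\<Sum>e\<in>E. (if e \<subseteq> T then 1 else 0) + (if e \<inter> T \<noteq> {} then 1 else 0)) \<le> (\<Sum>e\<in>E. card (e \<inter> T))"
  proof (intro sum_mono)
    fix e assume e: "e \<in> E"
    have ee: "card e = 2" "finite e" using tf_edge[OF tf e] by auto
    show "(if e \<subseteq> T then 1 else 0) + (if e \<inter> T \<noteq> {} then 1 else 0) \<le> card (e \<inter> T)"
    proof (cases "e \<subseteq> T")
      case True
      then have "e \<inter> T = e" by blast
      then show ?thesis using ee by auto
    next
      case False
      then show ?thesis using ee by (auto simp: card_gt_0_iff Suc_le_eq)
    qed
  qed
  also have "\<dots> = 2 * k" using tf_DC[OF tf T(1)] T by simp
  finally have "card {e\<in>E. e \<subseteq> T} + card {e\<in>E. e \<inter> T \<noteq> {}} \<le> 2 * k"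
    by (simp add: sum.distrib card_filter_sum[OF fE])
  moreover have "card {e\<in>E. e \<inter> T \<noteq> {}} + card {e\<in>E. e \<inter> T = {}} = card E"
  proof -
    have "{e\<in>E. e \<inter> T \<noteq> {}} \<union> {e\<in>E. e \<inter> T = {}} = E" by blast
    moreover have "card ({e\<in>E. e \<inter> T \<noteq> {}} \<union> {e\<in>E. e \<inter> T = {}}) = card {e\<in>E. e \<inter> T \<noteq> {}} + card {e\<in>E. e \<inter> T = {}}"
      using fE by (intro card_Un_disjoint) auto
    ultimately show ?thesis by simp
  qed
  ultimately show ?thesis using cE dense by linarith
qed

theorem lemma3p8:
  fixes k :: nat and V :: "'a set" and E :: "'a set set" and col :: "nat set \<Rightarrow> colour"
  assumes "k \<ge> 1"
    and "two_factor V E" and "card V = 3 * k"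
    and "bipartite_construction (3 * k) (1/3) col"
  shows "has_copy_with (3 * k) col V E Red (2 * k - 1) \<and> has_copy_with (3 * k) col V E Blue (2 * k - 1)"
proof -
  note tf = assms(2) and cV = assms(3)
  obtain X where X: "X \<subseteq> {0..<3*k}" "real (card X) = 1/3 * real (3*k)"
    and cols: "(\<forall>e\<in>KN_edges (3*k). col e = (if e \<inter> X \<noteq> {} then Red else Blue)) \<or>
        (\<forall>e\<in>KN_edges (3*k). col e = (if e \<inter> X \<noteq> {} then Blue else Red))"
    using assms(4) unfolding bipartite_construction_def by blast
  have cX: "card X = k" using X(2) by simp
  obtain T1 where T1: "T1 \<subseteq> V" "card T1 = k" "\<forall>e\<in>E. card (e \<inter> T1) \<le> 1"
    using indep[OF tf, of V k] cV by auto
  obtain T2 where T2: "T2 \<subseteq> V" "card T2 = k" "k \<le> card {e\<in>E. e \<subseteq> T2} + 1"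
    using grow[OF tf, of k] cV by auto
  have n1: "2 * k - 1 \<le> card {e\<in>E. e \<inter> T1 \<noteq> {}}" using count1[OF tf T1] by linarith
  have n2: "2 * k - 1 \<le> card {e\<in>E. e \<inter> T2 = {}}" using count2[OF tf cV T2] .
  have main: "has_copy_with (3 * k) col V E c1 (2 * k - 1) \<and> has_copy_with (3 * k) col V E c2 (2 * k - 1)"
    if h: "\<forall>e\<in>KN_edges (3*k). col e = (if e \<inter> X \<noteq> {} then c1 else c2)" and c12: "c1 \<noteq> c2" for c1 c2
  proof
    obtain f where "inj_on f V" "f ` V \<subseteq> {0..<3*k}" "card {e\<in>E. col (f ` e) = c1} = card {e\<in>E. e \<inter> T1 \<noteq> {}}"
      using embed[OF tf cV X(1) cX T1(1,2) h c12] by blast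
    then show "has_copy_with (3 * k) col V E c1 (2 * k - 1)" unfolding has_copy_with_def using n1 by auto
  next
    obtain f where "inj_on f V" "f ` V \<subseteq> {0..<3*k}" "card {e\<in>E. col (f ` e) = c2} = card {e\<in>E. e \<inter> T2 = {}}"
      using embed[OF tf cV X(1) cX T2(1,2) h c12] by blast
    then show "has_copy_with (3 * k) col V E c2 (2 * k - 1)" unfolding has_copy_with_def using n2 by auto
  qed
  from cols show ?thesis
  proof
    assume "\<forall>e\<in>KN_edges (3*k). col e = (if e \<inter> X \<noteq> {} then Red else Blue)"
    from main[OF this] show ?thesis by simp
  next
    assume "\<forall>e\<in>KN_edges (3*k). col e = (if e \<inter> X \<noteq> {} then Blue else Red)"
    from main[OF this] show ?thesis by simp
  qed
qed

end
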